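(* Let $\phi\in\mathcal{O}$, $\theta\in(0,\pi)$, and let $f$ be a positive smooth function on $\mathcal{C}_\theta$. Let $h>0$ be the support function of a symmetric $\widehat{\Sigma}\in\mathcal{K}_\theta^\circ$ solving $$\frac{1}{|\widehat{\Sigma}|}\phi\Big(\frac{\ell}{h}\Big)h\det(h_{ij}+h\delta_{ij})=f\ \text{ in }\mathcal{C}_\theta,\qquad\nabla_\mu h=\cot\theta\,h\ \text{ on }\partial\mathcal{C}_\theta.$$ Then there exists a constant $C_1>0$ depending only on $f,n,\theta,\phi,\|h\|_{C^0}$ such that $|\nabla h|\leqslant C_1$ on $\mathcal{C}_\theta$.
   Context: Setting: $n\geqslant1$, $\mathbb{R}^{n+1}_+=\{x\in\mathbb{R}^{n+1}: x_{n+1}>0\}$, $e=(0,\dots,0,-1)$, $\theta\in(0,\pi)$. A capillary hypersurface is a compact embedded $C^2$ hypersurface $\Sigma\subset\overline{\mathbb{R}^{n+1}_+}$ with boundary $\partial\Sigma\subset\partial\mathbb{R}^{n+1}_+$ whose outward unit normal $\nu$ satisfies $\langle\nu,e\rangle=\cos(\pi-\theta)$ along $\partial\Sigma$. If $\Sigma$ is convex with positive Gauss curvature, the domain $\widehat{\Sigma}$ bounded by $\Sigma$ and $\partial\mathbb{R}^{n+1}_+$ is a capillary convex body; $\mathcal{K}_\theta$ is the family of these, $\mathcal{K}_\theta^\circ$ the subfamily whose flat boundary $\partial\widehat{\Sigma}\setminus\Sigma$ contains the origin in its relative interior. $|\widehat{\Sigma}|$ is the volume. $\mathcal{C}_\theta=\{\xi\in\overline{\mathbb{R}^{n+1}_+}:|\xi-\cos\theta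 e|=1\}$ with induced round metric $\delta$, connection $\nabla$, $\mu$ the outward unit co-normal of $\partial\mathcal{C}_\theta$ in $\mathcal{C}_\theta$; $h_{ij}$ are second covariant derivatives in a local orthonormal frame. The capillary Gauss map $\widetilde{\nu}=\nu+\cos\theta e:\Sigma\to\mathcal{C}_\theta$ is a diffeomorphism and the support function is $h(\xi)=\langle\widetilde{\nu}^{-1}(\xi),\xi-\cos\theta e\rangle$. $\ell(\xi)=\sin^2\theta+\cos\theta\langle\xi,e\rangle$. Class $\mathcal{O}$: the $C^2$, strictly increasing, convex, log-concave functions $\phi:[0,+\infty)\to[0,+\infty)$ with $\phi(0)=0$ satisfying (A1) $\lim_{x\to0^+}\phi'(x)=0$; (A2) $\liminf_{x\to+\infty}\phi(x)/x^{n+1}>0$; (A3) $\frac{d}{dx}\log\frac{\phi(x)}{x}\geqslant0$ for all $x>0$. Even/symmetric: for $\xi\in\mathcal{C}_\theta$ let $\widehat{\xi}=(-\xi_1,\dots,-\xi_n,\xi_{n+1})$; a function $g$ is even if $g(\xi)=g(\widehat{\xi})$; $\widehat{\Sigma}$ is symmetric if its support function is even. *)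

theory Defs
  imports "HOL-Analysis.Analysis"
begin

text \<open>Ambient space R^(n+1) is real^'n with CARD('n) = n+1.  The fixed unit vector e
  plays the role of (0,...,0,-1); the open upper half space is {x. x \<bullet> e < 0}.\<close>

definition uhalf :: "real^'n \<Rightarrow> (real^'n) set" where
  "uhalf e = {x. x \<bullet> e < 0}"

definition cuhalf :: "real^'n \<Rightarrow> (real^'n) set" where
  "cuhalf e = {x. x \<bullet> e \<le> 0}"

definition bplane :: "real^'n \<Rightarrow> (real^'n) set" where
  "bplane e = {x. x \<bullet> e = 0}"

definition capC :: "real \<Rightarrow> real^'n \<Rightarrow> (real^'n) set" where
  "capC \<theta> e = {\<xi>. \<xi> \<bullet> e \<le> 0 \<and> norm (\<xi> - cos \<theta> *\<^sub>R e) = 1}"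

definition capBd :: "real \<Rightarrow> real^'n \<Rightarrow> (real^'n) set" where
  "capBd \<theta> e = {\<xi> \<in> capC \<theta> e. \<xi> \<bullet> e = 0}"

definition hatref :: "real^'n \<Rightarrow> real^'n \<Rightarrow> real^'n" where
  "hatref e \<xi> = (2 * (\<xi> \<bullet> e)) *\<^sub>R e - \<xi>"

definition ell :: "real \<Rightarrow> real^'n \<Rightarrow> real^'n \<Rightarrow> real" where
  "ell \<theta> e \<xi> = (sin \<theta>)\<^sup>2 + cos \<theta> * (\<xi> \<bullet> e)"

definition sigma :: "(real^'n) set \<Rightarrow> real^'n \<Rightarrow> (real^'n) set" where
  "sigma K e = closure (frontier K \<inter> uhalf e)"

text \<open>A local C^2 defining function F (gradient G, Hessian H) of K near Sigma:
  K \<inter> U = {F \<le> 0} \<inter> closed half space, DF nonzero; outward normal is G / |G|.\<close>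
definition C2_chart ::
  "real^'n \<Rightarrow> (real^'n) set \<Rightarrow> (real^'n) set \<Rightarrow> (real^'n \<Rightarrow> real)
     \<Rightarrow> (real^'n \<Rightarrow> real^'n) \<Rightarrow> (real^'n \<Rightarrow> real^'n \<Rightarrow> real^'n) \<Rightarrow> bool" where
  "C2_chart e K U F G H \<longleftrightarrow> open U \<and>
     (\<forall>y\<in>U. (F has_derivative (\<lambda>v. G y \<bullet> v)) (at y) \<and> (G has_derivative H y) (at y) \<and> G y \<noteq> 0) \<and>
     (\<forall>v. continuous_on U (\<lambda>y. H y v)) \<and>
     K \<inter> U = {y \<in> U. F y \<le> 0 \<and> y \<bullet> e \<le> 0}"

definition nu :: "real^'n \<Rightarrow> (real^'n) set \<Rightarrow> real^'n \<Rightarrow> real^'n" where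
  "nu e K X = (SOME N. \<exists>U F G H. C2_chart e K U F G H \<and> X \<in> U \<and> N = G X /\<^sub>R norm (G X))"

text \<open>Capillary convex body (the class K_theta): Sigma is a compact embedded C^2 convex
  hypersurface with boundary on the plane, positive Gauss curvature (definite second
  fundamental form) and capillary contact angle theta.\<close>
definition cap_body :: "real \<Rightarrow> real^'n \<Rightarrow> (real^'n) set \<Rightarrow> bool" where
  "cap_body \<theta> e K \<longleftrightarrow> compact K \<and> convex K \<and> K \<subseteq> cuhalf e \<and> interior K \<noteq> {} \<and>
     (\<forall>x \<in> sigma K e. \<exists>U F G H. C2_chart e K U F G H \<and> x \<in> U \<and>
        (\<forall>v. v \<noteq> 0 \<and> v \<bullet> G x = 0 \<longrightarrow> H x v \<bullet> v > 0)) \<and>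
     (\<forall>x \<in> sigma K e. x \<bullet> e = 0 \<longrightarrow> nu e K x \<bullet> e = cos (pi - \<theta>))"

definition cap_body0 :: "real \<Rightarrow> real^'n \<Rightarrow> (real^'n) set \<Rightarrow> bool" where
  "cap_body0 \<theta> e K \<longleftrightarrow> cap_body \<theta> e K \<and> 0 \<in> rel_interior (K \<inter> bplane e)"

definition supp :: "real \<Rightarrow> real^'n \<Rightarrow> (real^'n) set \<Rightarrow> real^'n \<Rightarrow> real" where
  "supp \<theta> e K \<xi> = (THE X. X \<in> sigma K e \<and> nu e K X + cos \<theta> *\<^sub>R e = \<xi>) \<bullet> (\<xi> - cos \<theta> *\<^sub>R e)"

definition even_cap :: "real \<Rightarrow> real^'n \<Rightarrow> (real^'n \<Rightarrow> real) \<Rightarrow> bool" where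
  "even_cap \<theta> e g \<longleftrightarrow> (\<forall>\<xi> \<in> capC \<theta> e. g (hatref e \<xi>) = g \<xi>)"

text \<open>Covariant derivatives are computed through the 0-homogeneous extension about p,
  whose ambient gradient/Hessian restricted to the tangent space equal the covariant ones.\<close>
definition capcone :: "real \<Rightarrow> real^'n \<Rightarrow> (real^'n) set" where
  "capcone \<theta> e = {x. x \<noteq> cos \<theta> *\<^sub>R e \<and>
      cos \<theta> *\<^sub>R e + (x - cos \<theta> *\<^sub>R e) /\<^sub>R norm (x - cos \<theta> *\<^sub>R e) \<in> capC \<theta> e}"

definition ext0 :: "real \<Rightarrow> real^'n \<Rightarrow> (real^'n \<Rightarrow> real) \<Rightarrow> real^'n \<Rightarrow> real" where
  "ext0 \<theta> e h x = h (cos \<theta> *\<^sub>R e + (x - cos \<theta> *\<^sub>R e) /\<^sub>R norm (x - cos \<theta> *\<^sub>R e))"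

definition sgrad :: "real \<Rightarrow> real^'n \<Rightarrow> (real^'n \<Rightarrow> real) \<Rightarrow> real^'n \<Rightarrow> real^'n" where
  "sgrad \<theta> e h x = (SOME v. (ext0 \<theta> e h has_derivative (\<lambda>u. v \<bullet> u)) (at x within capcone \<theta> e))"

definition shess :: "real \<Rightarrow> real^'n \<Rightarrow> (real^'n \<Rightarrow> real) \<Rightarrow> real^'n \<Rightarrow> real^'n \<Rightarrow> real^'n" where
  "shess \<theta> e h x = frechet_derivative (sgrad \<theta> e h) (at x within capcone \<theta> e)"

definition snormal :: "real \<Rightarrow> real^'n \<Rightarrow> real^'n \<Rightarrow> real^'n" where
  "snormal \<theta> e \<xi> = \<xi> - cos \<theta> *\<^sub>R e"

definition tproj :: "real \<Rightarrow> real^'n \<Rightarrow> real^'n \<Rightarrow> real^'n \<Rightarrow> real^'n" where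
  "tproj \<theta> e \<xi> v = v - (v \<bullet> snormal \<theta> e \<xi>) *\<^sub>R snormal \<theta> e \<xi>"

text \<open>det(h_ij + h delta_ij): determinant of the tangential block, extended by the identity
  on the normal direction.\<close>
definition sdet :: "real \<Rightarrow> real^'n \<Rightarrow> (real^'n \<Rightarrow> real) \<Rightarrow> real^'n \<Rightarrow> real" where
  "sdet \<theta> e h \<xi> = det (matrix (\<lambda>v.
      tproj \<theta> e \<xi> (shess \<theta> e h \<xi> (tproj \<theta> e \<xi> v) + h \<xi> *\<^sub>R tproj \<theta> e \<xi> v)
      + (v \<bullet> snormal \<theta> e \<xi>) *\<^sub>R snormal \<theta> e \<xi>))"

definition conormal :: "real \<Rightarrow> real^'n \<Rightarrow> real^'n \<Rightarrow> real^'n" where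
  "conormal \<theta> e \<xi> = (THE \<mu>. norm \<mu> = 1 \<and> \<mu> \<bullet> snormal \<theta> e \<xi> = 0 \<and>
      (\<forall>v. v \<bullet> snormal \<theta> e \<xi> = 0 \<and> v \<bullet> e = 0 \<longrightarrow> \<mu> \<bullet> v = 0) \<and> \<mu> \<bullet> e > 0)"

definition solves_eq :: "real \<Rightarrow> real^'n \<Rightarrow> (real \<Rightarrow> real) \<Rightarrow> (real^'n \<Rightarrow> real)
     \<Rightarrow> (real^'n) set \<Rightarrow> (real^'n \<Rightarrow> real) \<Rightarrow> bool" where
  "solves_eq \<theta> e \<phi> f K h \<longleftrightarrow>
     (\<forall>x \<in> capcone \<theta> e. ext0 \<theta> e h differentiable (at x within capcone \<theta> e)) \<and>
     (\<forall>\<xi> \<in> capC \<theta> e. sgrad \<theta> e h differentiable (at \<xi> within capcone \<theta> e)) \<and>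
     (\<forall>\<xi> \<in> capC \<theta> e.
        (1 / measure lebesgue K) * \<phi> (ell \<theta> e \<xi> / h \<xi>) * h \<xi> * sdet \<theta> e h \<xi> = f \<xi>) \<and>
     (\<forall>\<xi> \<in> capBd \<theta> e. sgrad \<theta> e h \<xi> \<bullet> conormal \<theta> e \<xi> = cot \<theta> * h \<xi>)"

definition class_O :: "nat \<Rightarrow> (real \<Rightarrow> real) \<Rightarrow> bool" where
  "class_O n \<phi> \<longleftrightarrow>
     (\<exists>\<phi>' \<phi>''. (\<forall>x\<ge>0. (\<phi> has_real_derivative \<phi>' x) (at x within {0..}) \<and>
                        (\<phi>' has_real_derivative \<phi>'' x) (at x within {0..})) \<and>
               continuous_on {0..} \<phi>'') \<and>
     strict_mono_on {0..} \<phi> \<and> convex_on {0..} \<phi> \<and> concave_on {0<..} (\<lambda>x. ln (\<phi> x)) \<and>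
     (\<forall>x\<ge>0. \<phi> x \<ge> 0) \<and> \<phi> 0 = 0 \<and>
     ((\<lambda>x. deriv \<phi> x) \<longlongrightarrow> 0) (at_right 0) \<and>
     Liminf at_top (\<lambda>x. ereal (\<phi> x / x ^ (n + 1))) > 0 \<and>
     (\<forall>x>0. deriv (\<lambda>t. ln (\<phi> t / t)) x \<ge> 0)"

fun iterD :: "(real^'n) list \<Rightarrow> (real^'n \<Rightarrow> real) \<Rightarrow> real^'n \<Rightarrow> real" where
  "iterD [] g = g"
| "iterD (v # vs) g = (\<lambda>x. frechet_derivative (iterD vs g) (at x) v)"

definition smooth_on :: "(real^'n) set \<Rightarrow> (real^'n \<Rightarrow> real) \<Rightarrow> bool" where
  "smooth_on U g \<longleftrightarrow> open U \<and> (\<forall>vs. \<forall>x\<in>U. iterD vs g differentiable (at x))"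

end

theory Submission
  imports Defs
begin

lemma line_deriv:
  fixes F :: "real^'n \<Rightarrow> real"
  assumes "(F has_derivative (\<lambda>v. g \<bullet> v)) (at (X + t0 *\<^sub>R w))"
  shows "((\<lambda>t. F (X + t *\<^sub>R w)) has_real_derivative (g \<bullet> w)) (at t0 within S)"
proof -
  have l: "((\<lambda>t. X + t *\<^sub>R w) has_derivative (\<lambda>t. t *\<^sub>R w)) (at t0 within S)"
    by (auto intro!: derivative_eq_intros)
  have "((\<lambda>t. F (X + t *\<^sub>R w)) has_derivative (\<lambda>t. g \<bullet> (t *\<^sub>R w))) (at t0 within S)"
    using has_derivative_compose[OF l assms] by simp
  moreover have "(\<lambda>t. g \<bullet> (t *\<^sub>R w)) = (*) (g \<bullet> w)" by (auto simp: algebra_simps)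
  ultimately show ?thesis by (simp add: has_field_derivative_def)
qed

lemma less_div_mult: "(0::real) < b \<Longrightarrow> t < a / b \<Longrightarrow> t * b < a"
  by (simp add: pos_less_divide_eq)

lemma chart_step:
  fixes e X w :: "real^'n"
  assumes ch: "C2_chart e K U F G H" and XU: "X \<in> U" and FX: "F X \<le> 0" and Xe: "X \<bullet> e \<le> 0"
    and Gw: "G X \<bullet> w < 0" and we: "w \<bullet> e < 0 \<or> X \<bullet> e < 0"
  shows "\<exists>d>0. \<forall>t. 0 < t \<and> t < d \<longrightarrow> X + t *\<^sub>R w \<in> K"
proof -
  from ch XU have dF: "(F has_derivative (\<lambda>v. G X \<bullet> v)) (at X)" and oU: "open U"
    and KU: "K \<inter> U = {y \<in> U. F y \<le> 0 \<and> y \<bullet> e \<le> 0}" unfolding C2_chart_def by auto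
  have "((\<lambda>t. F (X + t *\<^sub>R w)) has_real_derivative (G X \<bullet> w)) (at 0)"
    using line_deriv[of F "G X" X 0 w UNIV] dF by simp
  from has_real_derivative_neg_dec_right[OF this Gw]
  obtain d1 where d1: "d1>0" "\<forall>h>0. h < d1 \<longrightarrow> F (X + h *\<^sub>R w) < F X" by auto
  obtain r where r: "r>0" "ball X r \<subseteq> U" using oU XU open_contains_ball by blast
  obtain d3 where d3: "d3>0" "\<forall>t. 0<t \<and> t<d3 \<longrightarrow> (X + t *\<^sub>R w) \<bullet> e \<le> 0"
  proof (cases "w \<bullet> e < 0")
    case True
    show ?thesis
      apply (rule that[of 1]) using True Xe by (auto simp: inner_add_left intro!: add_nonpos_nonpos mult_nonneg_nonpos)
  next
    case False
    then have Xe': "X \<bullet> e < 0" using we by auto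
    show ?thesis
    proof (rule that[of "- (X \<bullet> e) / (\<bar>w \<bullet> e\<bar> + 1)"])
      show "0 < - (X \<bullet> e) / (\<bar>w \<bullet> e\<bar> + 1)" using Xe' by (intro divide_pos_pos) auto
      show "\<forall>t. 0 < t \<and> t < - (X \<bullet> e) / (\<bar>w \<bullet> e\<bar> + 1) \<longrightarrow> (X + t *\<^sub>R w) \<bullet> e \<le> 0"
      proof (intro allI impI)
        fix t assume t: "0 < t \<and> t < - (X \<bullet> e) / (\<bar>w \<bullet> e\<bar> + 1)"
        then have "t * (\<bar>w \<bullet> e\<bar> + 1) < - (X \<bullet> e)" using less_div_mult[of "\<bar>w \<bullet> e\<bar> + 1" t "- (X \<bullet> e)"] by auto
        moreover have "t * (w \<bullet> e) \<le> t * (\<bar>w \<bullet> e\<bar> + 1)" using t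
          by (intro mult_left_mono) auto
        ultimately show "(X + t *\<^sub>R w) \<bullet> e \<le> 0" by (simp add: inner_add_left)
      qed
    qed
  qed
  define d where "d = min d1 (min (r / (norm w + 1)) d3)"
  have nw: "norm w + 1 > 0" using norm_ge_zero[of w] by linarith
  have "r / (norm w + 1) > 0" using r nw by simp
  then have "d > 0" unfolding d_def using d1 r d3 by auto
  moreover have "X + t *\<^sub>R w \<in> K" if t: "0 < t" "t < d" for t
  proof -
    have "t * norm w < r"
    proof -
      have "t < r / (norm w + 1)" using t unfolding d_def by auto
      then have "t * (norm w + 1) < r" using less_div_mult[of "norm w + 1" t r] nw by auto
      then show ?thesis using t by (simp add: algebra_simps)
    qed
    then have "X + t *\<^sub>R w \<in> ball X r" using t by (simp add: dist_norm)
    then have "X + t *\<^sub>R w \<in> U" using r by auto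
    moreover have "F (X + t *\<^sub>R w) \<le> 0" using d1(2) t FX unfolding d_def by force
    moreover have "(X + t *\<^sub>R w) \<bullet> e \<le> 0" using d3(2) t unfolding d_def by auto
    ultimately show ?thesis using KU by blast
  qed
  ultimately show ?thesis by blast
qed

lemma sigma_sub: "closed K \<Longrightarrow> sigma K e \<subseteq> K"
  unfolding sigma_def
  by (metis closure_closed closure_mono frontier_closed frontier_subset_closed inf.cobounded1 order_trans)

lemma inner_e_bound:
  fixes e z y :: "real^'n"
  assumes "norm e = 1"
  shows "z \<bullet> e \<le> y \<bullet> e + norm (z - y)"
proof -
  have "(z - y) \<bullet> e \<le> norm (z - y) * norm e" using norm_cauchy_schwarz[of "z - y" e] by simp
  then show ?thesis using assms by (simp add: inner_diff_left)
qed

lemma sigma_F_zero: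
  fixes e :: "real^'n"
  assumes e1: "norm e = 1" and cK: "closed K" and ch: "C2_chart e K U F G H"
    and XU: "X \<in> U" and Xs: "X \<in> sigma K e"
  shows "F X = 0"
proof (rule ccontr)
  assume ne: "F X \<noteq> 0"
  from ch XU have dF: "(F has_derivative (\<lambda>v. G X \<bullet> v)) (at X)" and oU: "open U"
    and KU: "K \<inter> U = {y \<in> U. F y \<le> 0 \<and> y \<bullet> e \<le> 0}" unfolding C2_chart_def by auto
  have XK: "X \<in> K" using sigma_sub[OF cK] Xs by auto
  then have "F X \<le> 0" using KU XU by auto
  with ne have FX: "F X < 0" by auto
  have "isCont F X" using has_derivative_continuous[OF dF] by simp
  then have "\<forall>\<^sub>F y in at X. F y < 0" using FX by (simp add: isCont_def order_tendstoD)
  then obtain r1 where r1: "r1 > 0" "\<forall>y. y \<noteq> X \<and> dist y X < r1 \<longrightarrow> F y < 0"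
    unfolding eventually_at by auto
  obtain r2 where r2: "r2 > 0" "ball X r2 \<subseteq> U" using oU XU open_contains_ball by blast
  define r where "r = min r1 r2"
  have r: "r > 0" using r1 r2 r_def by auto
  have neg: "F y < 0" "y \<in> U" if "y \<in> ball X r" for y
    using that r1 r2 FX unfolding r_def by (auto simp: dist_commute)
  have intr: "y \<in> interior K" if y: "y \<in> ball X r" "y \<bullet> e < 0" for y
  proof -
    define r' where "r' = min (r - dist X y) (- (y \<bullet> e))"
    have "r' > 0" using y unfolding r'_def by auto
    moreover have "ball y r' \<subseteq> K"
    proof
      fix z assume z: "z \<in> ball y r'"
      have "dist X z \<le> dist X y + dist y z" by (rule dist_triangle)
      moreover have "dist y z < r - dist X y" using z unfolding r'_def by auto
      ultimately have "dist X z < r" by linarith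
      then have zb: "z \<in> ball X r" by auto
      have "z \<bullet> e \<le> y \<bullet> e + norm (z - y)" by (rule inner_e_bound[OF e1])
      moreover have "norm (z - y) < - (y \<bullet> e)" using z unfolding r'_def by (auto simp: dist_norm norm_minus_commute)
      ultimately have "z \<bullet> e \<le> 0" by auto
      then have "z \<in> {y \<in> U. F y \<le> 0 \<and> y \<bullet> e \<le> 0}" using neg[OF zb] by simp
      then show "z \<in> K" using KU by blast
    qed
    ultimately show ?thesis unfolding mem_interior by blast
  qed
  have "X \<in> closure (frontier K \<inter> uhalf e)" using Xs unfolding sigma_def .
  then obtain y where y: "y \<in> frontier K \<inter> uhalf e" "dist y X < r"
    using r unfolding closure_approachable by blast
  have "y \<in> ball X r" using y(2) by (simp add: dist_commute)
  moreover have "y \<bullet> e < 0" using y(1) by (simp add: uhalf_def)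
  ultimately have "y \<in> interior K" using intr by blast
  with y show False by (simp add: frontier_def)
qed

lemma chart_support:
  fixes e :: "real^'n"
  assumes e1: "norm e = 1" and cK: "closed K" and cvx: "convex K" and ch: "C2_chart e K U F G H"
    and XU: "X \<in> U" and Xs: "X \<in> sigma K e" and YK: "Y \<in> K"
  shows "G X \<bullet> (Y - X) \<le> 0"
proof (rule ccontr)
  assume "\<not> G X \<bullet> (Y - X) \<le> 0"
  then have pos: "G X \<bullet> (Y - X) > 0" by simp
  have F0: "F X = 0" by (rule sigma_F_zero[OF e1 cK ch XU Xs])
  from ch XU have dF: "(F has_derivative (\<lambda>v. G X \<bullet> v)) (at X)" and oU: "open U"
    and KU: "K \<inter> U = {y \<in> U. F y \<le> 0 \<and> y \<bullet> e \<le> 0}" unfolding C2_chart_def by auto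
  have "((\<lambda>t. F (X + t *\<^sub>R (Y - X))) has_real_derivative (G X \<bullet> (Y - X))) (at 0)"
    using line_deriv[of F "G X" X 0 "Y - X" UNIV] dF by simp
  from has_real_derivative_pos_inc_right[OF this pos]
  obtain d where d: "d>0" "\<forall>h>0. h < d \<longrightarrow> F X < F (X + h *\<^sub>R (Y - X))" by auto
  obtain r where r: "r>0" "ball X r \<subseteq> U" using oU XU open_contains_ball by blast
  have nw: "norm (Y - X) + 1 > 0" using norm_ge_zero[of "Y - X"] by linarith
  define h where "h = min (d/2) (min (1/2) (r / (2 * (norm (Y - X) + 1))))"
  have rp: "r / (2 * (norm (Y - X) + 1)) > 0" using r nw by simp
  then have h0: "h > 0" "h < d" "h \<le> 1" using d unfolding h_def by auto
  have "h \<le> r / (2 * (norm (Y - X) + 1))" unfolding h_def by auto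
  then have "h * (2 * (norm (Y - X) + 1)) \<le> r" using nw by (simp add: pos_le_divide_eq)
  moreover have "h * (2 * (norm (Y - X) + 1)) = 2 * (h * norm (Y - X)) + 2 * h" by (simp add: algebra_simps)
  moreover have "0 \<le> h * norm (Y - X)" using h0 by simp
  ultimately have "h * norm (Y - X) < r" using h0 by linarith
  then have "X + h *\<^sub>R (Y - X) \<in> ball X r" using h0 by (simp add: dist_norm)
  then have inU: "X + h *\<^sub>R (Y - X) \<in> U" using r by auto
  have XK: "X \<in> K" using sigma_sub[OF cK] Xs by auto
  have "(1 - h) *\<^sub>R X + h *\<^sub>R Y \<in> K"
    using convexD[OF cvx XK YK, of "1 - h" h] h0 by auto
  moreover have "(1 - h) *\<^sub>R X + h *\<^sub>R Y = X + h *\<^sub>R (Y - X)" by (simp add: algebra_simps)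
  ultimately have "X + h *\<^sub>R (Y - X) \<in> K \<inter> U" using inU by simp
  then have "F (X + h *\<^sub>R (Y - X)) \<le> 0" using KU by blast
  moreover have "F X < F (X + h *\<^sub>R (Y - X))" using d h0 by auto
  ultimately show False using F0 by simp
qed

lemma nu_chart:
  fixes e :: "real^'n"
  assumes cb: "cap_body \<theta> e K" and Xs: "X \<in> sigma K e"
  shows "\<exists>U F G H. C2_chart e K U F G H \<and> X \<in> U \<and> nu e K X = G X /\<^sub>R norm (G X)"
proof -
  from cb Xs obtain U F G H where "C2_chart e K U F G H" "X \<in> U"
    unfolding cap_body_def by blast
  then have "\<exists>N. \<exists>U F G H. C2_chart e K U F G H \<and> X \<in> U \<and> N = G X /\<^sub>R norm (G X)" by blast
  from someI_ex[OF this] show ?thesis unfolding nu_def by blast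
qed

lemma unit_inner_lt:
  fixes a b :: "real^'n"
  assumes "norm a = 1" "norm b = 1" "a \<noteq> b"
  shows "a \<bullet> b < 1"
proof -
  have "0 < (a - b) \<bullet> (a - b)" using assms(3) by simp
  also have "(a - b) \<bullet> (a - b) = a \<bullet> a - 2 * (a \<bullet> b) + b \<bullet> b"
    by (simp add: inner_diff_left inner_diff_right inner_commute)
  also have "a \<bullet> a = 1" using assms(1) by (simp add: dot_square_norm)
  also have "b \<bullet> b = 1" using assms(2) by (simp add: dot_square_norm)
  finally show ?thesis by simp
qed

lemma unit_inner_le:
  fixes a b :: "real^'n"
  assumes "norm a = 1" "norm b = 1"
  shows "a \<bullet> b \<le> 1"
  using norm_cauchy_schwarz[of a b] assms by simp

lemma cos_bounds:
  assumes "0 < \<theta>" "\<theta> < pi"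
  shows "-1 < cos \<theta>" "cos \<theta> < 1" "sin \<theta> > 0"
proof -
  have "cos pi < cos \<theta>" using cos_monotone_0_pi[of \<theta> pi] assms by auto
  then show "-1 < cos \<theta>" by simp
  have "cos \<theta> < cos 0" using cos_monotone_0_pi[of 0 \<theta>] assms by auto
  then show "cos \<theta> < 1" by simp
  show "sin \<theta> > 0" using sin_gt_zero assms by auto
qed

lemma interior_uhalf:
  fixes e :: "real^'n"
  assumes e1: "norm e = 1" and sub: "K \<subseteq> cuhalf e" and z: "z \<in> interior K"
  shows "z \<bullet> e < 0"
proof -
  obtain r where r: "r > 0" "ball z r \<subseteq> K" using z mem_interior by blast
  have "z + (r/2) *\<^sub>R e \<in> ball z r" using r e1 by (simp add: dist_norm)
  then have "z + (r/2) *\<^sub>R e \<in> cuhalf e" using r sub by auto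
  then have "z \<bullet> e + r/2 \<le> 0" using e1 by (simp add: cuhalf_def inner_add_left dot_square_norm)
  then show ?thesis using r by simp
qed

lemma max_not_interior:
  fixes \<nu> :: "real^'n"
  assumes nu: "\<nu> \<noteq> 0" and XK: "X \<in> K" and mx: "\<forall>Y\<in>K. Y \<bullet> \<nu> \<le> X \<bullet> \<nu>"
  shows "X \<notin> interior K"
proof
  assume "X \<in> interior K"
  then obtain r where r: "r > 0" "ball X r \<subseteq> K" using mem_interior by blast
  define s where "s = r / (2 * norm \<nu>)"
  have s: "s > 0" using r nu unfolding s_def by simp
  have "norm (s *\<^sub>R \<nu>) = r / 2" using nu r unfolding s_def by simp
  then have "X + s *\<^sub>R \<nu> \<in> ball X r" using r by (simp add: dist_norm)
  then have "(X + s *\<^sub>R \<nu>) \<bullet> \<nu> \<le> X \<bullet> \<nu>" using r mx by auto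
  then have "s * (\<nu> \<bullet> \<nu>) \<le> 0" by (simp add: inner_add_left)
  moreover have "\<nu> \<bullet> \<nu> > 0" using nu by simp
  ultimately show False using s by (simp add: mult_le_0_iff)
qed

lemma step_contra:
  fixes \<nu> w :: "real^'n"
  assumes mx: "\<forall>Y\<in>K. Y \<bullet> \<nu> \<le> X \<bullet> \<nu>" and st: "\<exists>d>0. \<forall>t. 0 < t \<and> t < d \<longrightarrow> X + t *\<^sub>R w \<in> K"
    and pos: "w \<bullet> \<nu> > 0"
  shows False
proof -
  obtain d where d: "d > 0" "\<forall>t. 0 < t \<and> t < d \<longrightarrow> X + t *\<^sub>R w \<in> K" using st by blast
  have "X + (d/2) *\<^sub>R w \<in> K" using d by auto
  then have "(X + (d/2) *\<^sub>R w) \<bullet> \<nu> \<le> X \<bullet> \<nu>" using mx by blast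
  then have "(d/2) * (w \<bullet> \<nu>) \<le> 0" by (simp add: inner_add_left)
  then show False using d pos by (simp add: mult_le_0_iff)
qed

lemma max_sigma_nu:
  fixes e \<nu> :: "real^'n"
  assumes e1: "norm e = 1" and th0: "0 < \<theta>" and thpi: "\<theta> < pi" and cb: "cap_body \<theta> e K"
    and nu1: "norm \<nu> = 1" and nue: "\<nu> \<bullet> e \<le> - cos \<theta>"
    and XK: "X \<in> K" and mx: "\<forall>Y\<in>K. Y \<bullet> \<nu> \<le> X \<bullet> \<nu>"
  shows "X \<in> sigma K e \<and> nu e K X = \<nu>"
proof -
  have cK: "compact K" and cvx: "convex K" and sub: "K \<subseteq> cuhalf e" and int: "interior K \<noteq> {}"
    and cap: "\<forall>x \<in> sigma K e. x \<bullet> e = 0 \<longrightarrow> nu e K x \<bullet> e = cos (pi - \<theta>)"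
    using cb unfolding cap_body_def by auto
  have clK: "closed K" using cK compact_imp_closed by auto
  have cb1: "-1 < cos \<theta>" "cos \<theta> < 1" using cos_bounds th0 thpi by auto
  have nu0: "\<nu> \<noteq> 0" using nu1 by auto
  have Xe: "X \<bullet> e \<le> 0" using XK sub by (auto simp: cuhalf_def)
  have nue1: "\<nu> \<bullet> e < 1" using nue cb1 by linarith
  have nu_eq: "nu e K X = \<nu>" if Xs: "X \<in> sigma K e"
  proof (rule ccontr)
    assume ne: "nu e K X \<noteq> \<nu>"
    obtain U F G H where ch: "C2_chart e K U F G H" and XU: "X \<in> U"
      and nuX: "nu e K X = G X /\<^sub>R norm (G X)" using nu_chart[OF cb Xs] by blast
    have G0: "G X \<noteq> 0" using ch XU unfolding C2_chart_def by auto
    define N where "N = nu e K X"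
    have N1: "norm N = 1" using G0 nuX unfolding N_def by simp
    have GN: "G X \<bullet> w = norm (G X) * (N \<bullet> w)" for w
      unfolding N_def nuX using G0 by (simp add: inner_commute)
    have ngp: "norm (G X) > 0" using G0 by simp
    have FX: "F X \<le> 0" using ch XU XK unfolding C2_chart_def by auto
    have lt: "\<nu> \<bullet> N < 1" using unit_inner_lt[OF nu1 N1] ne unfolding N_def by auto
    show False
    proof (cases "X \<bullet> e < 0")
      case True
      define w where "w = \<nu> - N"
      have "N \<bullet> w < 0" unfolding w_def using lt N1
        by (simp add: inner_diff_right inner_commute dot_square_norm)
      then have "G X \<bullet> w < 0" using GN ngp by (simp add: mult_pos_neg)
      from chart_step[OF ch XU FX Xe this] True
      have st: "\<exists>d>0. \<forall>t. 0 < t \<and> t < d \<longrightarrow> X + t *\<^sub>R w \<in> K" by auto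
      have "w \<bullet> \<nu> = \<nu> \<bullet> \<nu> - \<nu> \<bullet> N" unfolding w_def by (simp add: inner_diff_left inner_commute[of N \<nu>])
      then have "w \<bullet> \<nu> > 0" using lt nu1 by (simp add: dot_square_norm)
      from step_contra[OF mx st this] show False .
    next
      case False
      then have X0: "X \<bullet> e = 0" using Xe by auto
      have Ne: "N \<bullet> e = - cos \<theta>" using cap Xs X0 unfolding N_def by simp
      define dd where "dd = 1 - \<nu> \<bullet> N"
      have dd: "dd > 0" using lt unfolding dd_def by simp
      define w where "w = \<nu> - N - (dd/2) *\<^sub>R e"
      have "N \<bullet> w = \<nu> \<bullet> N - 1 - (dd/2) * (N \<bullet> e)" unfolding w_def using N1
        by (simp add: inner_diff_right inner_commute dot_square_norm)
      also have "\<dots> = - dd + (dd/2) * cos \<theta>" using Ne unfolding dd_def by simp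
      finally have Nw: "N \<bullet> w = - dd + (dd/2) * cos \<theta>" .
      have "(dd/2) * cos \<theta> < (dd/2) * 1" using dd cb1 by (intro mult_strict_left_mono) auto
      then have "N \<bullet> w < 0" using Nw dd by linarith
      then have "G X \<bullet> w < 0" using GN ngp by (simp add: mult_pos_neg)
      moreover have "w \<bullet> e < 0"
      proof -
        have "w \<bullet> e = \<nu> \<bullet> e - N \<bullet> e - dd/2" unfolding w_def using e1
          by (simp add: inner_diff_left dot_square_norm)
        then show ?thesis using Ne nue dd by simp
      qed
      ultimately have st: "\<exists>d>0. \<forall>t. 0 < t \<and> t < d \<longrightarrow> X + t *\<^sub>R w \<in> K"
        using chart_step[OF ch XU FX Xe] by blast
      have "w \<bullet> \<nu> = \<nu> \<bullet> \<nu> - \<nu> \<bullet> N - (dd/2) * (\<nu> \<bullet> e)" unfolding w_def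
        by (simp add: inner_diff_left inner_commute[of N \<nu>] inner_commute[of e \<nu>])
      then have "w \<bullet> \<nu> = dd - (dd/2) * (\<nu> \<bullet> e)" using nu1 unfolding dd_def by (simp add: dot_square_norm)
      moreover have "(dd/2) * (\<nu> \<bullet> e) < (dd/2) * 1" using nue1 dd by (intro mult_strict_left_mono) auto
      ultimately have "w \<bullet> \<nu> > 0" using dd by linarith
      from step_contra[OF mx st this] show False .
    qed
  qed
  have Xs: "X \<in> sigma K e"
  proof (cases "X \<bullet> e < 0")
    case True
    have "X \<notin> interior K" using max_not_interior[OF nu0 XK mx] .
    then have "X \<in> frontier K" using XK clK by (simp add: frontier_def)
    then have "X \<in> frontier K \<inter> uhalf e" using True by (simp add: uhalf_def)
    then show ?thesis unfolding sigma_def using closure_subset by blast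
  next
    case False
    then have X0: "X \<bullet> e = 0" using Xe by auto
    show ?thesis
    proof (rule ccontr)
      assume nX: "X \<notin> sigma K e"
      then obtain r where r: "r > 0" and far: "\<forall>y\<in>frontier K \<inter> uhalf e. \<not> dist y X < r"
        unfolding sigma_def closure_approachable by blast
      have "X \<in> closure (interior K)" using convex_closure_interior[OF cvx int] XK closure_subset by blast
      then obtain z where z: "z \<in> interior K" "dist z X < r/2"
        using r unfolding closure_approachable by (meson half_gt_zero)
      have ze: "z \<bullet> e < 0" using interior_uhalf[OF e1 sub z(1)] .
      have zK: "z \<in> K" using z(1) interior_subset by blast
      define w where "w = \<nu> - e"
      have we: "w \<bullet> e < 0" unfolding w_def using e1 nue1 by (simp add: inner_diff_left dot_square_norm)
      have "w \<bullet> \<nu> = \<nu> \<bullet> \<nu> - \<nu> \<bullet> e" unfolding w_def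
        by (simp add: inner_diff_left inner_commute[of e \<nu>])
      then have wnu: "w \<bullet> \<nu> > 0" using nu1 nue1 by (simp add: dot_square_norm)
      have nw: "norm w + 1 > 0" using norm_ge_zero[of w] by linarith
      have st: "\<exists>d>0. \<forall>t. 0 < t \<and> t < d \<longrightarrow> X + t *\<^sub>R w \<in> K"
      proof (intro exI[of _ "r / (2 * (norm w + 1))"] conjI allI impI)
        show "r / (2 * (norm w + 1)) > 0" using r nw by simp
        fix t assume t: "0 < t \<and> t < r / (2 * (norm w + 1))"
        define y where "y = X + t *\<^sub>R w"
        have "t * (2 * (norm w + 1)) < r" using less_div_mult[of "2 * (norm w + 1)" t r] t nw by auto
        moreover have "t * (2 * (norm w + 1)) = 2 * (t * norm w) + 2 * t" by (simp add: algebra_simps)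
        moreover have "0 \<le> t * norm w" using t by simp
        ultimately have "t * norm w < r / 2" using t by linarith
        then have yb: "y \<in> ball X (r/2)" unfolding y_def using t by (simp add: dist_norm)
        have ye: "y \<bullet> e < 0" unfolding y_def using X0 we t by (simp add: inner_add_left mult_pos_neg)
        define S where "S = ball X (r/2) \<inter> {x. e \<bullet> x < 0}"
        have cS: "convex S" unfolding S_def by (intro convex_Int convex_ball convex_halfspace_lt)
        have zS: "z \<in> S" unfolding S_def using z ze by (simp add: dist_commute inner_commute)
        have yS: "y \<in> S" unfolding S_def using yb ye by (simp add: inner_commute)
        show "X + t *\<^sub>R w \<in> K"
        proof (rule ccontr)
          assume "X + t *\<^sub>R w \<notin> K"
          then have yK: "y \<notin> K" unfolding y_def .
          have "closed_segment z y \<inter> frontier K \<noteq> {}"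
            using connected_Int_frontier[of "closed_segment z y" K] zK yK by auto
          then obtain q where q: "q \<in> closed_segment z y" "q \<in> frontier K" by blast
          have "q \<in> S" using closed_segment_subset[OF zS yS cS] q(1) by blast
          then have "dist X q < r/2" "e \<bullet> q < 0" unfolding S_def by auto
          then have "dist X q < r" "q \<in> uhalf e" unfolding uhalf_def
            using zero_le_dist[of X q] by (linarith, simp add: inner_commute)
          then have "dist q X < r" "q \<in> uhalf e" by (simp_all add: dist_commute)
          then show False using far q(2) by blast
        qed
      qed
      from step_contra[OF mx st wnu] show False .
    qed
  qed
  then show ?thesis using nu_eq by blast
qed

lemma sigma_nu_max:
  fixes e :: "real^'n"
  assumes e1: "norm e = 1" and cb: "cap_body \<theta> e K" and Xs: "X \<in> sigma K e"
  shows "\<forall>Y\<in>K. Y \<bullet> nu e K X \<le> X \<bullet> nu e K X"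
proof
  fix Y assume YK: "Y \<in> K"
  have cK: "compact K" and cvx: "convex K" using cb unfolding cap_body_def by auto
  have clK: "closed K" using cK compact_imp_closed by auto
  obtain U F G H where ch: "C2_chart e K U F G H" and XU: "X \<in> U"
    and nuX: "nu e K X = G X /\<^sub>R norm (G X)" using nu_chart[OF cb Xs] by blast
  have G0: "G X \<noteq> 0" using ch XU unfolding C2_chart_def by auto
  have "G X \<bullet> (Y - X) \<le> 0" by (rule chart_support[OF e1 clK cvx ch XU Xs YK])
  then have "(Y - X) \<bullet> G X \<le> 0" by (simp add: inner_commute)
  then have "(Y - X) \<bullet> nu e K X \<le> 0" unfolding nuX using G0
    by (simp add: mult_nonneg_nonpos)
  then show "Y \<bullet> nu e K X \<le> X \<bullet> nu e K X" by (simp add: inner_diff_left)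
qed

lemma curv_unique:
  fixes e \<nu> :: "real^'n"
  assumes e1: "norm e = 1" and cb: "cap_body \<theta> e K" and nu1: "norm \<nu> = 1" and nue1: "\<nu> \<bullet> e < 1"
    and XK: "X \<in> K" and mx: "\<forall>Y\<in>K. Y \<bullet> \<nu> \<le> X \<bullet> \<nu>"
    and X2s: "X2 \<in> sigma K e" and mx2: "\<forall>Y\<in>K. Y \<bullet> \<nu> \<le> X2 \<bullet> \<nu>"
  shows "X = X2"
proof (rule ccontr)
  assume ne: "X \<noteq> X2"
  have cK: "compact K" and cvx: "convex K" and sub: "K \<subseteq> cuhalf e"
    using cb unfolding cap_body_def by auto
  have clK: "closed K" using cK compact_imp_closed by auto
  have X2K: "X2 \<in> K" using sigma_sub[OF clK] X2s by auto
  obtain U F G H where ch: "C2_chart e K U F G H" and X2U: "X2 \<in> U"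
    and pd: "\<forall>v. v \<noteq> 0 \<and> v \<bullet> G X2 = 0 \<longrightarrow> H X2 v \<bullet> v > 0"
    using cb X2s unfolding cap_body_def by blast
  from ch X2U have dF: "\<And>y. y \<in> U \<Longrightarrow> (F has_derivative (\<lambda>v. G y \<bullet> v)) (at y)"
    and dG: "(G has_derivative H X2) (at X2)" and oU: "open U"
    and KU: "K \<inter> U = {y \<in> U. F y \<le> 0 \<and> y \<bullet> e \<le> 0}" unfolding C2_chart_def by auto
  have F0: "F X2 = 0" by (rule sigma_F_zero[OF e1 clK ch X2U X2s])
  define v where "v = X - X2"
  have v0: "v \<noteq> 0" using ne unfolding v_def by simp
  have vnu: "v \<bullet> \<nu> = 0" using mx[rule_format, OF X2K] mx2[rule_format, OF XK]
    unfolding v_def by (simp add: inner_diff_left)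
  have Gvle: "G X2 \<bullet> v \<le> 0" unfolding v_def by (rule chart_support[OF e1 clK cvx ch X2U X2s XK])
  have X2e: "X2 \<bullet> e \<le> 0" using X2K sub by (auto simp: cuhalf_def)
  have Xe: "X \<bullet> e \<le> 0" using XK sub by (auto simp: cuhalf_def)
  have Gv0: "G X2 \<bullet> v = 0"
  proof (rule ccontr)
    assume "G X2 \<bullet> v \<noteq> 0"
    then have Gv: "G X2 \<bullet> v < 0" using Gvle by simp
    define a where "a = G X2 \<bullet> (\<nu> - e)"
    have a1: "\<bar>a\<bar> + 1 > 0" by simp
    define \<epsilon> where "\<epsilon> = - (G X2 \<bullet> v) / (2 * (\<bar>a\<bar> + 1))"
    have \<epsilon>0: "\<epsilon> > 0" unfolding \<epsilon>_def using Gv a1 by (intro divide_pos_pos) auto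
    have \<epsilon>a: "\<epsilon> * (2 * (\<bar>a\<bar> + 1)) = - (G X2 \<bullet> v)" unfolding \<epsilon>_def using a1 by simp
    define w where "w = v + \<epsilon> *\<^sub>R (\<nu> - e)"
    have "G X2 \<bullet> w = G X2 \<bullet> v + \<epsilon> * a" unfolding w_def a_def by (simp add: inner_add_right)
    moreover have "\<epsilon> * a \<le> \<epsilon> * (\<bar>a\<bar> + 1)" using \<epsilon>0 by (intro mult_left_mono) auto
    ultimately have Gw: "G X2 \<bullet> w < 0" using \<epsilon>a Gv by (simp add: algebra_simps)
    have we: "w \<bullet> e < 0 \<or> X2 \<bullet> e < 0"
    proof (cases "X2 \<bullet> e < 0")
      case False
      then have "X2 \<bullet> e = 0" using X2e by simp
      then have "v \<bullet> e \<le> 0" unfolding v_def using Xe by (simp add: inner_diff_left)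
      moreover have "w \<bullet> e = v \<bullet> e + \<epsilon> * (\<nu> \<bullet> e - 1)" unfolding w_def using e1
        by (simp add: inner_add_left inner_diff_left dot_square_norm)
      moreover have "\<epsilon> * (\<nu> \<bullet> e - 1) < 0" using \<epsilon>0 nue1 by (simp add: mult_pos_neg)
      ultimately show ?thesis by simp
    qed simp
    have "F X2 \<le> 0" using F0 by simp
    from chart_step[OF ch X2U this X2e Gw we]
    have st: "\<exists>d>0. \<forall>t. 0 < t \<and> t < d \<longrightarrow> X2 + t *\<^sub>R w \<in> K" .
    have "w \<bullet> \<nu> = v \<bullet> \<nu> + \<epsilon> * (\<nu> \<bullet> \<nu> - e \<bullet> \<nu>)" unfolding w_def
      by (simp add: inner_add_left inner_diff_left)
    also have "\<dots> = \<epsilon> * (1 - \<nu> \<bullet> e)" using vnu nu1 by (simp add: dot_square_norm inner_commute)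
    finally have "w \<bullet> \<nu> > 0" using \<epsilon>0 nue1 by simp
    from step_contra[OF mx2 st this] show False .
  qed
  have Hpos: "H X2 v \<bullet> v > 0" using pd v0 Gv0 by (simp add: inner_commute)
  have blH: "bounded_linear (H X2)" using dG has_derivative_bounded_linear by blast
  have l: "((\<lambda>t. X2 + t *\<^sub>R v) has_derivative (\<lambda>t. t *\<^sub>R v)) (at 0)"
    by (auto intro!: derivative_eq_intros)
  have dG': "(G has_derivative H X2) (at (X2 + 0 *\<^sub>R v))" using dG by simp
  have "((\<lambda>t. G (X2 + t *\<^sub>R v)) has_derivative (\<lambda>t. H X2 (t *\<^sub>R v))) (at 0)"
    using has_derivative_compose[OF l dG'] by simp
  then have "((\<lambda>t. G (X2 + t *\<^sub>R v) \<bullet> v) has_derivative (\<lambda>t. H X2 (t *\<^sub>R v) \<bullet> v)) (at 0)"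
    by (rule has_derivative_inner_left)
  moreover have "(\<lambda>t. H X2 (t *\<^sub>R v) \<bullet> v) = (*) (H X2 v \<bullet> v)"
    using linear_scale[OF bounded_linear.linear[OF blH]] by (auto simp: mult.commute)
  ultimately have "((\<lambda>t. G (X2 + t *\<^sub>R v) \<bullet> v) has_real_derivative (H X2 v \<bullet> v)) (at 0)"
    by (simp add: has_field_derivative_def)
  from has_real_derivative_pos_inc_right[OF this Hpos]
  obtain d1 where d1: "d1 > 0" "\<forall>h>0. h < d1 \<longrightarrow> G X2 \<bullet> v < G (X2 + h *\<^sub>R v) \<bullet> v" by auto
  obtain r where r: "r>0" "ball X2 r \<subseteq> U" using oU X2U open_contains_ball by blast
  have nw: "norm v + 1 > 0" using norm_ge_zero[of v] by linarith
  define t where "t = min (d1/2) (min (1/2) (r / (2 * (norm v + 1))))"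
  have rp: "r / (2 * (norm v + 1)) > 0" using r nw by simp
  then have t0: "t > 0" "t < d1" "t \<le> 1" using d1 unfolding t_def by auto
  have "t \<le> r / (2 * (norm v + 1))" unfolding t_def by auto
  then have "t * (2 * (norm v + 1)) \<le> r" using nw by (simp add: pos_le_divide_eq)
  moreover have "t * (2 * (norm v + 1)) = 2 * (t * norm v) + 2 * t" by (simp add: algebra_simps)
  moreover have "0 \<le> t * norm v" using t0 by simp
  ultimately have tv: "t * norm v < r" using t0 by linarith
  have inU: "X2 + x *\<^sub>R v \<in> U" if "0 \<le> x" "x \<le> t" for x
  proof -
    have "x * norm v \<le> t * norm v" using that by (intro mult_right_mono) auto
    then have "norm (x *\<^sub>R v) < r" using tv that by simp
    then have "X2 + x *\<^sub>R v \<in> ball X2 r" by (simp add: dist_norm)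
    then show ?thesis using r by auto
  qed
  have der: "DERIV (\<lambda>s. F (X2 + s *\<^sub>R v)) x :> (G (X2 + x *\<^sub>R v) \<bullet> v)" if "0 \<le> x" "x \<le> t" for x
    using line_deriv[of F "G (X2 + x *\<^sub>R v)" X2 x v UNIV] dF[OF inU[OF that]] by simp
  obtain z where z: "0 < z" "z < t" "F (X2 + t *\<^sub>R v) - F (X2 + 0 *\<^sub>R v) = (t - 0) * (G (X2 + z *\<^sub>R v) \<bullet> v)"
    using MVT2[of 0 t "\<lambda>s. F (X2 + s *\<^sub>R v)" "\<lambda>x. G (X2 + x *\<^sub>R v) \<bullet> v"] der t0 by blast
  have "G (X2 + z *\<^sub>R v) \<bullet> v > 0" using d1(2) z t0 Gv0 by auto
  then have Fpos: "F (X2 + t *\<^sub>R v) > 0" using z t0 F0 by simp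
  have "(1 - t) *\<^sub>R X2 + t *\<^sub>R X \<in> K"
    using convexD[OF cvx X2K XK, of "1 - t" t] t0 by auto
  moreover have "(1 - t) *\<^sub>R X2 + t *\<^sub>R X = X2 + t *\<^sub>R v" unfolding v_def by (simp add: algebra_simps)
  ultimately have "X2 + t *\<^sub>R v \<in> K \<inter> U" using inU[of t] t0 by simp
  then have "F (X2 + t *\<^sub>R v) \<le> 0" using KU by blast
  then show False using Fpos by simp
qed

lemma supp_max:
  fixes e :: "real^'n"
  assumes e1: "norm e = 1" and th0: "0 < \<theta>" and thpi: "\<theta> < pi" and cb: "cap_body \<theta> e K"
    and xi: "\<xi> \<in> capC \<theta> e"
  shows "\<exists>X\<in>K. (\<forall>Y\<in>K. Y \<bullet> (\<xi> - cos \<theta> *\<^sub>R e) \<le> X \<bullet> (\<xi> - cos \<theta> *\<^sub>R e))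
            \<and> supp \<theta> e K \<xi> = X \<bullet> (\<xi> - cos \<theta> *\<^sub>R e)"
proof -
  define \<nu> where "\<nu> = \<xi> - cos \<theta> *\<^sub>R e"
  have nu1: "norm \<nu> = 1" using xi unfolding capC_def \<nu>_def by simp
  have "\<nu> \<bullet> e = \<xi> \<bullet> e - cos \<theta>" unfolding \<nu>_def using e1 by (simp add: inner_diff_left dot_square_norm)
  then have nue: "\<nu> \<bullet> e \<le> - cos \<theta>" using xi unfolding capC_def by simp
  have cb1: "-1 < cos \<theta>" using cos_bounds th0 thpi by auto
  have nue1: "\<nu> \<bullet> e < 1" using nue cb1 by linarith
  have cK: "compact K" and int: "interior K \<noteq> {}" using cb unfolding cap_body_def by auto
  have Kne: "K \<noteq> {}" using int interior_subset by blast
  have "continuous_on K (\<lambda>Y. Y \<bullet> \<nu>)" by (intro continuous_intros)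
  from continuous_attains_sup[OF cK Kne this]
  obtain X where XK: "X \<in> K" and mx: "\<forall>Y\<in>K. Y \<bullet> \<nu> \<le> X \<bullet> \<nu>" by blast
  have Xs: "X \<in> sigma K e" and nuX: "nu e K X = \<nu>"
    using max_sigma_nu[OF e1 th0 thpi cb nu1 nue XK mx] by auto
  have "(THE X. X \<in> sigma K e \<and> nu e K X + cos \<theta> *\<^sub>R e = \<xi>) = X"
  proof (rule the_equality)
    show "X \<in> sigma K e \<and> nu e K X + cos \<theta> *\<^sub>R e = \<xi>" using Xs nuX unfolding \<nu>_def by simp
  next
    fix X2 assume X2: "X2 \<in> sigma K e \<and> nu e K X2 + cos \<theta> *\<^sub>R e = \<xi>"
    then have nu2: "nu e K X2 = \<nu>" unfolding \<nu>_def by auto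
    have mx2: "\<forall>Y\<in>K. Y \<bullet> \<nu> \<le> X2 \<bullet> \<nu>" using sigma_nu_max[OF e1 cb] X2 nu2 by metis
    show "X2 = X" using curv_unique[OF e1 cb nu1 nue1 XK mx _ mx2] X2 by metis
  qed
  then have "supp \<theta> e K \<xi> = X \<bullet> \<nu>" unfolding supp_def \<nu>_def by simp
  then show ?thesis using XK mx unfolding \<nu>_def by blast
qed

lemma deriv_bound:
  fixes g :: "real \<Rightarrow> real"
  assumes der: "(g has_real_derivative D) (at 0 within {0<..<d})" and d: "d > 0"
    and lip: "\<forall>t. 0 < t \<and> t < d \<longrightarrow> \<bar>g t - g 0\<bar> \<le> L * t"
  shows "\<bar>D\<bar> \<le> L"
proof -
  have lim: "((\<lambda>y. (g y - g 0) / (y - 0)) \<longlongrightarrow> D) (at 0 within {0<..<d})"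
    using der by (simp add: has_field_derivative_iff)
  have lim2: "((\<lambda>y. \<bar>(g y - g 0) / (y - 0)\<bar>) \<longlongrightarrow> \<bar>D\<bar>) (at 0 within {0<..<d})"
    by (rule tendsto_rabs[OF lim])
  have "\<forall>y\<in>{0<..<d}. \<bar>(g y - g 0) / (y - 0)\<bar> \<le> L"
  proof
    fix y :: real assume y: "y \<in> {0<..<d}"
    then have "\<bar>g y - g 0\<bar> \<le> L * y" using lip by auto
    then show "\<bar>(g y - g 0) / (y - 0)\<bar> \<le> L" using y by (simp add: abs_divide pos_divide_le_eq)
  qed
  then have ev: "eventually (\<lambda>y. \<bar>(g y - g 0) / (y - 0)\<bar> \<le> L) (at 0 within {0<..<d})"
    by (auto simp: eventually_at_filter)
  have nt: "\<not> trivial_limit (at (0::real) within {0<..<d})"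
    using trivial_limit_within islimpt_greaterThanLessThan1[OF d] by blast
  show ?thesis using tendsto_upperbound[OF lim2 ev nt] .
qed

lemma dir_bound:
  fixes f :: "real^'n \<Rightarrow> real"
  assumes der: "(f has_derivative (\<lambda>u. v \<bullet> u)) (at \<xi> within S)" and d: "d > 0"
    and inS: "\<forall>t. 0 < t \<and> t < d \<longrightarrow> \<xi> + t *\<^sub>R u \<in> S"
    and lip: "\<forall>t. 0 < t \<and> t < d \<longrightarrow> \<bar>f (\<xi> + t *\<^sub>R u) - f \<xi>\<bar> \<le> L * t"
  shows "\<bar>v \<bullet> u\<bar> \<le> L"
proof -
  have l: "((\<lambda>t. \<xi> + t *\<^sub>R u) has_derivative (\<lambda>t. t *\<^sub>R u)) (at 0 within {0<..<d})"
    by (auto intro!: derivative_eq_intros)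
  have sub: "(\<lambda>t. \<xi> + t *\<^sub>R u) ` {0<..<d} \<subseteq> S" using inS by auto
  have "(f has_derivative (\<lambda>u. v \<bullet> u)) (at (\<xi> + 0 *\<^sub>R u) within (\<lambda>t. \<xi> + t *\<^sub>R u) ` {0<..<d})"
    using has_derivative_subset[OF der sub] by simp
  from has_derivative_in_compose[OF l this]
  have "((\<lambda>t. f (\<xi> + t *\<^sub>R u)) has_derivative (\<lambda>t. v \<bullet> (t *\<^sub>R u))) (at 0 within {0<..<d})" .
  moreover have "(\<lambda>t. v \<bullet> (t *\<^sub>R u)) = (*) (v \<bullet> u)" by (auto simp: algebra_simps)
  ultimately have "((\<lambda>t. f (\<xi> + t *\<^sub>R u)) has_real_derivative (v \<bullet> u)) (at 0 within {0<..<d})"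
    by (simp add: has_field_derivative_def)
  from deriv_bound[OF this d] lip show ?thesis by simp
qed

lemma small_t:
  fixes a b k :: real
  assumes a: "a \<le> 0" and ab: "a < 0 \<or> b < 0" and k: "k \<ge> 0"
  shows "\<exists>d>0. \<forall>t. 0 < t \<and> t < d \<longrightarrow> a + t * b + t\<^sup>2 * k \<le> 0"
proof (cases "a < 0")
  case True
  define d where "d = min 1 (- a / (\<bar>b\<bar> + k + 1))"
  have pos: "\<bar>b\<bar> + k + 1 > 0" using k by linarith
  have "- a / (\<bar>b\<bar> + k + 1) > 0" using True pos by (intro divide_pos_pos) auto
  then have "d > 0" unfolding d_def by simp
  moreover have "a + t * b + t\<^sup>2 * k \<le> 0" if t: "0 < t" "t < d" for t
  proof -
    have "t < - a / (\<bar>b\<bar> + k + 1)" using t unfolding d_def by simp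
    then have t1: "t * (\<bar>b\<bar> + k + 1) < - a" using less_div_mult[OF pos] by blast
    have "t\<^sup>2 \<le> t" using t unfolding d_def power2_eq_square by (simp add: mult_le_cancel_left1)
    then have "t\<^sup>2 * k \<le> t * k" using k by (simp add: mult_right_mono)
    moreover have "t * b \<le> t * \<bar>b\<bar>" using t by (simp add: mult_left_mono)
    moreover have "t * (\<bar>b\<bar> + k + 1) = t * \<bar>b\<bar> + t * k + t" by (simp add: algebra_simps)
    ultimately show ?thesis using t1 t by linarith
  qed
  ultimately show ?thesis by blast
next
  case False
  then have b: "b < 0" using ab by simp
  define d where "d = - b / (k + 1)"
  have pos: "k + 1 > 0" using k by linarith
  have "d > 0" unfolding d_def using b pos by (intro divide_pos_pos) auto
  moreover have "a + t * b + t\<^sup>2 * k \<le> 0" if t: "0 < t" "t < d" for t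
  proof -
    have "t * (k + 1) < - b" using less_div_mult[OF pos] t unfolding d_def by blast
    then have "t * k + b < 0" using t by (simp add: algebra_simps)
    then have "t * (t * k + b) < 0" using t by (simp add: mult_pos_neg)
    moreover have "t * (t * k + b) = t * b + t\<^sup>2 * k" by (simp add: algebra_simps power2_eq_square)
    ultimately show ?thesis using a by linarith
  qed
  ultimately show ?thesis by blast
qed

lemma normalize_bound:
  fixes a b :: "real^'n"
  assumes b1: "norm b = 1" and a0: "a \<noteq> 0"
  shows "norm (a /\<^sub>R norm a - b) \<le> 2 * norm (a - b)"
proof -
  have "a /\<^sub>R norm a - a = (1 / norm a - 1) *\<^sub>R a" by (simp add: algebra_simps inverse_eq_divide)
  then have "norm (a /\<^sub>R norm a - a) = \<bar>1 / norm a - 1\<bar> * norm a" by simp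
  also have "\<dots> = \<bar>1 - norm a\<bar>" using a0
    by (simp add: abs_mult_pos[symmetric] algebra_simps divide_simps)
  also have "\<dots> = \<bar>norm b - norm a\<bar>" using b1 by simp
  also have "\<dots> \<le> norm (a - b)" using norm_triangle_ineq3[of b a] by (simp add: norm_minus_commute)
  finally have 1: "norm (a /\<^sub>R norm a - a) \<le> norm (a - b)" .
  have "norm (a /\<^sub>R norm a - b) \<le> norm (a /\<^sub>R norm a - a) + norm (a - b)"
    using norm_triangle_ineq[of "a /\<^sub>R norm a - a" "a - b"] by simp
  then show ?thesis using 1 by simp
qed

lemma R_bound:
  fixes e :: "real^'n"
  assumes e1: "norm e = 1" and th0: "0 < \<theta>" and thpi: "\<theta> < pi" and cb: "cap_body \<theta> e K"
    and hM: "\<forall>\<xi>\<in>capC \<theta> e. \<bar>supp \<theta> e K \<xi>\<bar> \<le> M" and YK: "Y \<in> K"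
  shows "norm Y \<le> \<bar>M\<bar> + 2 * \<bar>M\<bar> / sin \<theta>"
proof -
  define c where "c = cos \<theta>"
  have cb1: "-1 < c" "c < 1" "sin \<theta> > 0" using cos_bounds th0 thpi unfolding c_def by auto
  have sub: "K \<subseteq> cuhalf e" using cb unfolding cap_body_def by auto
  have hle: "Y \<bullet> (\<xi> - c *\<^sub>R e) \<le> \<bar>M\<bar>" if xi: "\<xi> \<in> capC \<theta> e" for \<xi>
  proof -
    obtain X where "X \<in> K" "\<forall>Y\<in>K. Y \<bullet> (\<xi> - c *\<^sub>R e) \<le> X \<bullet> (\<xi> - c *\<^sub>R e)"
      "supp \<theta> e K \<xi> = X \<bullet> (\<xi> - c *\<^sub>R e)"
      using supp_max[OF e1 th0 thpi cb xi] unfolding c_def by blast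
    then have "Y \<bullet> (\<xi> - c *\<^sub>R e) \<le> supp \<theta> e K \<xi>" using YK by auto
    also have "\<dots> \<le> \<bar>M\<bar>" using hM xi by force
    finally show ?thesis .
  qed
  define s where "s = - (Y \<bullet> e)"
  have s0: "s \<ge> 0" using YK sub unfolding s_def cuhalf_def by auto
  have "(c - 1) *\<^sub>R e \<in> capC \<theta> e" unfolding capC_def c_def using e1 cb1
    by (simp add: dot_square_norm algebra_simps)
  from hle[OF this] have sM: "s \<le> \<bar>M\<bar>" unfolding s_def by (simp add: algebra_simps)
  define YT where "YT = Y - (Y \<bullet> e) *\<^sub>R e"
  have YTe: "YT \<bullet> e = 0" unfolding YT_def using e1 by (simp add: inner_diff_left dot_square_norm)
  have "Y = YT + (Y \<bullet> e) *\<^sub>R e" unfolding YT_def by simp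
  then have "norm Y \<le> norm YT + norm ((Y \<bullet> e) *\<^sub>R e)" by (metis norm_triangle_ineq)
  also have "norm ((Y \<bullet> e) *\<^sub>R e) = s" unfolding s_def using e1 s0 s_def by simp
  finally have Ytri: "norm Y \<le> norm YT + s" .
  have YT_bound: "norm YT \<le> 2 * \<bar>M\<bar> / sin \<theta>"
  proof (cases "YT = 0")
    case True
    then show ?thesis using cb1 by simp
  next
    case False
    define w where "w = YT /\<^sub>R norm YT"
    have w1: "norm w = 1" unfolding w_def using False by simp
    have we: "w \<bullet> e = 0" unfolding w_def using YTe by simp
    define \<xi> where "\<xi> = sin \<theta> *\<^sub>R w"
    have "norm (\<xi> - c *\<^sub>R e) ^ 2 = (\<xi> - c *\<^sub>R e) \<bullet> (\<xi> - c *\<^sub>R e)" by (simp add: dot_square_norm)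
    also have "\<dots> = (sin \<theta>)\<^sup>2 * (w \<bullet> w) + c\<^sup>2 * (e \<bullet> e) - 2 * (sin \<theta> * c) * (w \<bullet> e)"
      unfolding \<xi>_def by (simp add: inner_diff_left inner_diff_right inner_commute power2_eq_square algebra_simps)
    also have "\<dots> = 1" using w1 e1 we unfolding c_def by (simp add: dot_square_norm)
    finally have "norm (\<xi> - c *\<^sub>R e) ^ 2 = 1" .
    from real_sqrt_unique[OF this norm_ge_zero] have "norm (\<xi> - c *\<^sub>R e) = 1" by simp
    moreover have "\<xi> \<bullet> e \<le> 0" unfolding \<xi>_def using we by simp
    ultimately have "\<xi> \<in> capC \<theta> e" unfolding capC_def c_def by simp
    from hle[OF this] have h2: "Y \<bullet> (\<xi> - c *\<^sub>R e) \<le> \<bar>M\<bar>" .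
    have ee: "e \<bullet> e = 1" using e1 power2_norm_eq_inner[of e] by simp
    have a1: "Y \<bullet> YT = Y \<bullet> Y - (Y \<bullet> e) * (Y \<bullet> e)" unfolding YT_def
      by (simp add: inner_diff_right)
    have a2: "YT \<bullet> YT = Y \<bullet> Y - (Y \<bullet> e) * (Y \<bullet> e)" unfolding YT_def
      by (simp add: inner_diff_left inner_diff_right ee inner_commute[of e Y] algebra_simps)
    have YYT: "Y \<bullet> YT = YT \<bullet> YT" using a1 a2 by simp
    have "Y \<bullet> w = norm YT" unfolding w_def using False YYT
      by (simp add: dot_square_norm power2_eq_square)
    then have "Y \<bullet> (\<xi> - c *\<^sub>R e) = sin \<theta> * norm YT + c * s" unfolding \<xi>_def s_def
      by (simp add: inner_diff_right)
    then have "sin \<theta> * norm YT \<le> \<bar>M\<bar> - c * s" using h2 by simp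
    also have "- c * s \<le> s" using cb1 s0 by (smt (verit) mult_le_cancel_right1 mult_minus_left)
    then have "\<bar>M\<bar> - c * s \<le> 2 * \<bar>M\<bar>" using sM by simp
    finally have "sin \<theta> * norm YT \<le> 2 * \<bar>M\<bar>" .
    then show ?thesis using cb1 by (simp add: pos_le_divide_eq mult.commute)
  qed
  show ?thesis using Ytri YT_bound sM by simp
qed

lemma supp_lip:
  fixes e :: "real^'n"
  assumes e1: "norm e = 1" and th0: "0 < \<theta>" and thpi: "\<theta> < pi" and cb: "cap_body \<theta> e K"
    and R: "\<forall>Y\<in>K. norm Y \<le> R" and x1: "\<xi> \<in> capC \<theta> e" and x2: "\<xi>' \<in> capC \<theta> e"
  shows "\<bar>supp \<theta> e K \<xi>' - supp \<theta> e K \<xi>\<bar> \<le> R * norm (\<xi>' - \<xi>)"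
proof -
  obtain X where X: "X \<in> K" "\<forall>Y\<in>K. Y \<bullet> (\<xi> - cos \<theta> *\<^sub>R e) \<le> X \<bullet> (\<xi> - cos \<theta> *\<^sub>R e)"
      "supp \<theta> e K \<xi> = X \<bullet> (\<xi> - cos \<theta> *\<^sub>R e)"
    using supp_max[OF e1 th0 thpi cb x1] by blast
  obtain X' where X': "X' \<in> K" "\<forall>Y\<in>K. Y \<bullet> (\<xi>' - cos \<theta> *\<^sub>R e) \<le> X' \<bullet> (\<xi>' - cos \<theta> *\<^sub>R e)"
      "supp \<theta> e K \<xi>' = X' \<bullet> (\<xi>' - cos \<theta> *\<^sub>R e)"
    using supp_max[OF e1 th0 thpi cb x2] by blast
  have f1: "X' \<bullet> (\<xi> - cos \<theta> *\<^sub>R e) \<le> X \<bullet> (\<xi> - cos \<theta> *\<^sub>R e)" using X X' by blast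
  have f2: "X' \<bullet> (\<xi>' - cos \<theta> *\<^sub>R e) - X' \<bullet> (\<xi> - cos \<theta> *\<^sub>R e) = X' \<bullet> (\<xi>' - \<xi>)"
    by (simp add: inner_diff_right)
  have u1: "supp \<theta> e K \<xi>' - supp \<theta> e K \<xi> \<le> X' \<bullet> (\<xi>' - \<xi>)" using f1 f2 X(3) X'(3) by linarith
  have "X' \<bullet> (\<xi>' - \<xi>) \<le> norm X' * norm (\<xi>' - \<xi>)" by (rule norm_cauchy_schwarz)
  also have "\<dots> \<le> R * norm (\<xi>' - \<xi>)" using R X' by (simp add: mult_right_mono)
  finally have b1: "supp \<theta> e K \<xi>' - supp \<theta> e K \<xi> \<le> R * norm (\<xi>' - \<xi>)" using u1 by linarith
  have g1: "X \<bullet> (\<xi>' - cos \<theta> *\<^sub>R e) \<le> X' \<bullet> (\<xi>' - cos \<theta> *\<^sub>R e)" using X X' by blast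
  have g2: "X \<bullet> (\<xi> - cos \<theta> *\<^sub>R e) - X \<bullet> (\<xi>' - cos \<theta> *\<^sub>R e) = X \<bullet> (\<xi> - \<xi>')"
    by (simp add: inner_diff_right)
  have u2: "supp \<theta> e K \<xi> - supp \<theta> e K \<xi>' \<le> X \<bullet> (\<xi> - \<xi>')" using g1 g2 X(3) X'(3) by linarith
  have "X \<bullet> (\<xi> - \<xi>') \<le> norm X * norm (\<xi> - \<xi>')" by (rule norm_cauchy_schwarz)
  also have "\<dots> \<le> R * norm (\<xi>' - \<xi>)" using R X by (simp add: mult_right_mono norm_minus_commute)
  finally have b2: "supp \<theta> e K \<xi> - supp \<theta> e K \<xi>' \<le> R * norm (\<xi>' - \<xi>)" using u2 by linarith
  show ?thesis using b1 b2 by linarith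
qed

lemma quad_bound:
  fixes x R :: real
  assumes "x \<ge> 0" "R \<ge> 0" "x * x \<le> 2 * R * (x + 1)"
  shows "x \<le> 2 * R + 1"
proof (rule ccontr)
  assume "\<not> x \<le> 2 * R + 1"
  then have x: "x > 2 * R + 1" by simp
  then have "x * x > (2 * R + 1) * x" using assms by (intro mult_strict_right_mono) auto
  then show False using assms x by (simp add: algebra_simps)
qed

lemma grad_bound:
  fixes e :: "real^'n"
  assumes e1: "norm e = 1" and th0: "0 < \<theta>" and thpi: "\<theta> < pi" and cb: "cap_body \<theta> e K"
    and R: "\<forall>Y\<in>K. norm Y \<le> R" and R0: "R \<ge> 0"
    and sol: "solves_eq \<theta> e \<phi> f K (supp \<theta> e K)" and xi: "\<xi> \<in> capC \<theta> e"
  shows "norm (sgrad \<theta> e (supp \<theta> e K) \<xi>) \<le> 2 * R + 1"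
proof -
  define h where "h = supp \<theta> e K"
  define c where "c = cos \<theta>"
  have cb1: "-1 < c" "c < 1" using cos_bounds th0 thpi unfolding c_def by auto
  have ee: "e \<bullet> e = 1" using e1 power2_norm_eq_inner[of e] by simp
  define n where "n = \<xi> - c *\<^sub>R e"
  have n1: "norm n = 1" using xi unfolding capC_def n_def c_def by simp
  have nn: "n \<bullet> n = 1" using n1 power2_norm_eq_inner[of n] by simp
  have xie: "\<xi> \<bullet> e \<le> 0" using xi unfolding capC_def by simp
  have ne: "n \<bullet> e = \<xi> \<bullet> e - c" unfolding n_def by (simp add: inner_diff_left ee)
  have cone_pt: "x \<in> capcone \<theta> e \<and> ext0 \<theta> e h x = h (c *\<^sub>R e + (x - c *\<^sub>R e) /\<^sub>R norm (x - c *\<^sub>R e))"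
    if "x \<noteq> c *\<^sub>R e" "c *\<^sub>R e + (x - c *\<^sub>R e) /\<^sub>R norm (x - c *\<^sub>R e) \<in> capC \<theta> e" for x
    using that unfolding capcone_def ext0_def c_def by simp
  have xi_cone: "\<xi> \<in> capcone \<theta> e" and ext_xi: "ext0 \<theta> e h \<xi> = h \<xi>"
  proof -
    have xne: "\<xi> \<noteq> c *\<^sub>R e" using n1 unfolding n_def by auto
    have "\<xi> - c *\<^sub>R e = n" unfolding n_def ..
    then have "c *\<^sub>R e + (\<xi> - c *\<^sub>R e) /\<^sub>R norm (\<xi> - c *\<^sub>R e) = \<xi>" using n1 unfolding n_def by simp
    then show "\<xi> \<in> capcone \<theta> e" "ext0 \<theta> e h \<xi> = h \<xi>" using cone_pt[OF xne] xi by auto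
  qed
  have "ext0 \<theta> e h differentiable (at \<xi> within capcone \<theta> e)"
    using sol xi_cone unfolding solves_eq_def h_def by blast
  then obtain D where D: "(ext0 \<theta> e h has_derivative D) (at \<xi> within capcone \<theta> e)"
    unfolding differentiable_def by blast
  have lD: "linear D" using has_derivative_linear[OF D] .
  have Deq: "D = (\<lambda>u. adjoint D 1 \<bullet> u)"
  proof
    fix u
    have "u \<bullet> adjoint D 1 = D u \<bullet> 1" by (rule adjoint_works[OF lD])
    then show "D u = adjoint D 1 \<bullet> u" by (simp add: inner_commute)
  qed
  have "(ext0 \<theta> e h has_derivative (\<lambda>u. adjoint D 1 \<bullet> u)) (at \<xi> within capcone \<theta> e)"
    using D by (subst Deq[symmetric])
  then have "\<exists>v. (ext0 \<theta> e h has_derivative (\<lambda>u. v \<bullet> u)) (at \<xi> within capcone \<theta> e)" by blast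
  from someI_ex[OF this]
  have der: "(ext0 \<theta> e h has_derivative (\<lambda>u. sgrad \<theta> e h \<xi> \<bullet> u)) (at \<xi> within capcone \<theta> e)"
    unfolding sgrad_def c_def by simp
  define v where "v = sgrad \<theta> e h \<xi>"
  note der = der[folded v_def]
  have "\<bar>v \<bullet> n\<bar> \<le> 0"
  proof (rule dir_bound[OF der, of 1])
    have pt: "\<xi> + t *\<^sub>R n \<in> capcone \<theta> e \<and> ext0 \<theta> e h (\<xi> + t *\<^sub>R n) = h \<xi>" if t: "0 < t" for t
    proof -
      have eq: "\<xi> + t *\<^sub>R n - c *\<^sub>R e = (1 + t) *\<^sub>R n" unfolding n_def by (simp add: algebra_simps)
      have nrm: "norm ((1 + t) *\<^sub>R n) = 1 + t" using n1 t by simp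
      have q: "c *\<^sub>R e + (\<xi> + t *\<^sub>R n - c *\<^sub>R e) /\<^sub>R norm (\<xi> + t *\<^sub>R n - c *\<^sub>R e) = \<xi>"
        unfolding eq nrm using t unfolding n_def by simp
      have "\<xi> + t *\<^sub>R n \<noteq> c *\<^sub>R e"
      proof
        assume "\<xi> + t *\<^sub>R n = c *\<^sub>R e"
        then have "norm (\<xi> + t *\<^sub>R n - c *\<^sub>R e) = 0" by simp
        then show False unfolding eq nrm using t by simp
      qed
      then show ?thesis using cone_pt[of "\<xi> + t *\<^sub>R n"] q xi by simp
    qed
    show "\<forall>t. 0 < t \<and> t < 1 \<longrightarrow> \<xi> + t *\<^sub>R n \<in> capcone \<theta> e" using pt by blast
    show "\<forall>t. 0 < t \<and> t < 1 \<longrightarrow> \<bar>ext0 \<theta> e h (\<xi> + t *\<^sub>R n) - ext0 \<theta> e h \<xi>\<bar> \<le> 0 * t"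
      using pt ext_xi by simp
  qed simp
  then have vn: "v \<bullet> n = 0" by simp
  have tang: "\<bar>v \<bullet> u\<bar> \<le> 2 * R * norm u" if un: "u \<bullet> n = 0" and ue: "\<xi> \<bullet> e < 0 \<or> u \<bullet> e < 0" for u
  proof -
    obtain d where d: "d > 0" "\<forall>t. 0 < t \<and> t < d \<longrightarrow> \<xi> \<bullet> e + t * (u \<bullet> e) + t\<^sup>2 * (norm u)\<^sup>2 \<le> 0"
      using small_t[of "\<xi> \<bullet> e" "u \<bullet> e" "(norm u)\<^sup>2"] xie ue by auto
    have pt: "\<xi> + t *\<^sub>R u \<in> capcone \<theta> e \<and>
        \<bar>ext0 \<theta> e h (\<xi> + t *\<^sub>R u) - ext0 \<theta> e h \<xi>\<bar> \<le> 2 * R * norm u * t" if t: "0 < t" "t < d" for t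
    proof -
      define a where "a = n + t *\<^sub>R u"
      have eq: "\<xi> + t *\<^sub>R u - c *\<^sub>R e = a" unfolding a_def n_def by (simp add: algebra_simps)
      have uu: "u \<bullet> u = (norm u)\<^sup>2" by (simp add: power2_norm_eq_inner)
      have "a \<bullet> a = n \<bullet> n + 2 * t * (u \<bullet> n) + t\<^sup>2 * (u \<bullet> u)" unfolding a_def
        by (simp add: inner_add_left inner_add_right inner_commute[of n u] power2_eq_square algebra_simps)
      then have aa: "a \<bullet> a = 1 + t\<^sup>2 * (norm u)\<^sup>2" using nn un uu by simp
      define s where "s = norm a"
      have ss: "s\<^sup>2 = 1 + t\<^sup>2 * (norm u)\<^sup>2" unfolding s_def using aa power2_norm_eq_inner[of a] by simp
      have s1: "s \<ge> 1"
      proof -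
        have "s\<^sup>2 \<ge> 1\<^sup>2" using ss by simp
        moreover have "0 \<le> s" unfolding s_def by simp
        ultimately show ?thesis by (rule power2_le_imp_le)
      qed
      have a0: "a \<noteq> 0" using s1 unfolding s_def by auto
      have "s - 1 \<le> s\<^sup>2 - 1" using s1 by (simp add: power2_eq_square)
      then have sm1: "s - 1 \<le> t\<^sup>2 * (norm u)\<^sup>2" using ss by simp
      have "c * (s - 1) \<le> 1 * (s - 1)" using cb1 s1 by (intro mult_right_mono) auto
      then have cs: "c * s - c \<le> t\<^sup>2 * (norm u)\<^sup>2" using sm1 by (simp add: algebra_simps)
      have ae: "a \<bullet> e = \<xi> \<bullet> e - c + t * (u \<bullet> e)" unfolding a_def using ne by (simp add: inner_add_left)
      have key: "c * s + a \<bullet> e \<le> 0" using cs ae d t by force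
      define q where "q = c *\<^sub>R e + a /\<^sub>R s"
      have "q \<bullet> e = c + (a \<bullet> e) / s" unfolding q_def using ee by (simp add: inner_add_left divide_inverse mult.commute)
      also have "\<dots> = (c * s + a \<bullet> e) / s" using s1 by (simp add: field_simps)
      also have "\<dots> \<le> 0" using key s1 by (simp add: divide_nonpos_pos)
      finally have qe: "q \<bullet> e \<le> 0" .
      have "norm (q - c *\<^sub>R e) = 1" unfolding q_def s_def using a0 by simp
      then have qC: "q \<in> capC \<theta> e" using qe unfolding capC_def c_def by simp
      have xne: "\<xi> + t *\<^sub>R u \<noteq> c *\<^sub>R e" using eq a0 by auto
      have q': "c *\<^sub>R e + (\<xi> + t *\<^sub>R u - c *\<^sub>R e) /\<^sub>R norm (\<xi> + t *\<^sub>R u - c *\<^sub>R e) = q"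
        unfolding eq q_def s_def ..
      have inC: "\<xi> + t *\<^sub>R u \<in> capcone \<theta> e" and ex: "ext0 \<theta> e h (\<xi> + t *\<^sub>R u) = h q"
        using cone_pt[OF xne] q' qC by auto
      have "\<bar>h q - h \<xi>\<bar> \<le> R * norm (q - \<xi>)"
        using supp_lip[OF e1 th0 thpi cb R xi qC] unfolding h_def by simp
      also have "q - \<xi> = a /\<^sub>R norm a - n" unfolding q_def s_def n_def by simp
      also have "R * norm (a /\<^sub>R norm a - n) \<le> R * (2 * norm (a - n))"
        using normalize_bound[OF n1 a0] R0 by (intro mult_left_mono) auto
      also have "a - n = t *\<^sub>R u" unfolding a_def by simp
      finally have "\<bar>h q - h \<xi>\<bar> \<le> 2 * R * norm u * t" using t by (simp add: algebra_simps)
      then show ?thesis using inC ex ext_xi by simp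
    qed
    show ?thesis
      by (rule dir_bound[OF der d(1)]) (use pt in auto)
  qed
  have vv: "v \<bullet> v = (norm v)\<^sup>2" by (simp add: power2_norm_eq_inner)
  have fin1: "norm v \<le> 2 * R + 1" if "\<bar>v \<bullet> v\<bar> \<le> 2 * R * norm v"
  proof -
    have "norm v * norm v \<le> 2 * R * (norm v + 1)" using that vv R0
      by (simp add: power2_eq_square algebra_simps)
    then show ?thesis using quad_bound[OF norm_ge_zero R0] by blast
  qed
  show ?thesis
  proof (cases "\<xi> \<bullet> e < 0 \<or> v \<bullet> e < 0")
    case True
    from tang[OF vn True] show ?thesis unfolding v_def[symmetric] h_def[symmetric] using fin1 v_def h_def by simp
  next
    case False
    then have x0: "\<xi> \<bullet> e = 0" and ve: "v \<bullet> e \<ge> 0" using xie by auto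
    show ?thesis
    proof (cases "v \<bullet> e > 0")
      case True
      have "(-v) \<bullet> n = 0" "\<xi> \<bullet> e < 0 \<or> (-v) \<bullet> e < 0" using vn True by auto
      from tang[OF this] have "\<bar>v \<bullet> v\<bar> \<le> 2 * R * norm v" by simp
      from fin1[OF this] show ?thesis unfolding v_def h_def .
    next
      case False
      then have ve0: "v \<bullet> e = 0" using ve by simp
      have en: "e \<bullet> n = - c" using ne x0 by (simp add: inner_commute)
      define eT where "eT = e - (e \<bullet> n) *\<^sub>R n"
      define u where "u = v - eT"
      have un: "u \<bullet> n = 0" unfolding u_def eT_def using vn nn
        by (simp add: inner_diff_left inner_commute[of v n])
      have "u \<bullet> e = v \<bullet> e - (e \<bullet> e - (e \<bullet> n) * (n \<bullet> e))" unfolding u_def eT_def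
        by (simp add: inner_diff_left)
      also have "\<dots> = - (1 - c\<^sup>2)" using ve0 ee en by (simp add: inner_commute[of n e] power2_eq_square)
      finally have ue: "u \<bullet> e < 0" using cb1 by (simp add: abs_square_less_1)
      have vu: "v \<bullet> u = v \<bullet> v" unfolding u_def eT_def using ve0 vn
        by (simp add: inner_diff_right)
      have eTeT: "eT \<bullet> eT = 1 - (e \<bullet> n)\<^sup>2" unfolding eT_def using ee nn
        by (simp add: inner_diff_left inner_diff_right inner_commute[of n e] power2_eq_square algebra_simps)
      have "norm eT \<le> 1"
      proof -
        have "(norm eT)\<^sup>2 \<le> 1" using eTeT by (simp add: power2_norm_eq_inner)
        then show ?thesis by (simp add: power_le_one_iff abs_le_square_iff)
      qed
      then have nu: "norm u \<le> norm v + 1" unfolding u_def using norm_triangle_ineq4[of v eT] by linarith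
      from tang[OF un] ue have "\<bar>v \<bullet> u\<bar> \<le> 2 * R * norm u" by simp
      then have "v \<bullet> v \<le> 2 * R * (norm v + 1)" using vu nu R0
        by (smt (verit) mult_left_mono mult_nonneg_nonneg)
      then have "norm v * norm v \<le> 2 * R * (norm v + 1)" using vv by (simp add: power2_eq_square)
      from quad_bound[OF norm_ge_zero R0 this] show ?thesis unfolding v_def h_def .
    qed
  qed
qed

theorem lemma4p2:
  fixes e :: "real^'n" and \<theta> :: real and \<phi> :: "real \<Rightarrow> real"
    and f :: "real^'n \<Rightarrow> real" and M :: real
  assumes "CARD('n) \<ge> 2" and "norm e = 1" and "0 < \<theta>" and "\<theta> < pi"
    and "class_O (CARD('n) - 1) \<phi>"
    and "\<forall>\<xi> \<in> capC \<theta> e. f \<xi> > 0"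
    and "\<exists>U. capC \<theta> e \<subseteq> U \<and> smooth_on U f"
  shows "\<exists>C1 > 0. \<forall>K. cap_body0 \<theta> e K \<and> even_cap \<theta> e (supp \<theta> e K)
            \<and> (\<forall>\<xi> \<in> capC \<theta> e. supp \<theta> e K \<xi> > 0)
            \<and> solves_eq \<theta> e \<phi> f K (supp \<theta> e K)
            \<and> (\<forall>\<xi> \<in> capC \<theta> e. \<bar>supp \<theta> e K \<xi>\<bar> \<le> M)
          \<longrightarrow> (\<forall>\<xi> \<in> capC \<theta> e. norm (sgrad \<theta> e (supp \<theta> e K) \<xi>) \<le> C1)"
proof -
  have e1: "norm e = 1" and th0: "0 < \<theta>" and thpi: "\<theta> < pi" using assms by auto
  have sp: "sin \<theta> > 0" using cos_bounds th0 thpi by auto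
  define R where "R = \<bar>M\<bar> + 2 * \<bar>M\<bar> / sin \<theta>"
  have R0: "R \<ge> 0" unfolding R_def using sp by simp
  show ?thesis
  proof (intro exI[of _ "2 * R + 1"] conjI allI impI ballI)
    show "2 * R + 1 > 0" using R0 by simp
  next
    fix K \<xi>
    assume H: "cap_body0 \<theta> e K \<and> even_cap \<theta> e (supp \<theta> e K)
            \<and> (\<forall>\<xi> \<in> capC \<theta> e. supp \<theta> e K \<xi> > 0)
            \<and> solves_eq \<theta> e \<phi> f K (supp \<theta> e K)
            \<and> (\<forall>\<xi> \<in> capC \<theta> e. \<bar>supp \<theta> e K \<xi>\<bar> \<le> M)"
      and xi: "\<xi> \<in> capC \<theta> e"
    have cb: "cap_body \<theta> e K" using H unfolding cap_body0_def by blast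
    have sol: "solves_eq \<theta> e \<phi> f K (supp \<theta> e K)" using H by blast
    have hM: "\<forall>\<xi> \<in> capC \<theta> e. \<bar>supp \<theta> e K \<xi>\<bar> \<le> M" using H by blast
    have Rb: "\<forall>Y\<in>K. norm Y \<le> R" using R_bound[OF e1 th0 thpi cb hM] unfolding R_def by blast
    show "norm (sgrad \<theta> e (supp \<theta> e K) \<xi>) \<le> 2 * R + 1"
      by (rule grad_bound[OF e1 th0 thpi cb Rb R0 sol xi])
  qed
qed

end
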